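(* A metric space $(X,d_X)$ is coarse Lipschitz embeddable into $c_0(\kappa)$ for some cardinality $\kappa$ if and only if there are $C,D\in[0,\infty)$ such that $\Delta_X^{(c)}(R)\leq CR+D$ for all $R\in[0,\infty)$. A metric space $(X,d_X)$ is bi-Lipschitz embeddable into $c_0(\kappa)$ for some cardinality $\kappa$ if and only if there is $C\in[0,\infty)$ such that $\Delta_X^{(c)}(R)\leq CR$ for all $R\in[0,\infty)$.
   Context: For a cardinal $\kappa$, $c_0(\kappa)$ is the space of real families $(x_\xi)_{\xi<\kappa}$ such that $\{\xi: |x_\xi|>\eta\}$ is finite for every $\eta>0$, with the sup norm. For a cover $\mathcal{U}$ of $X$: $\mathrm{diam}(\mathcal{U})=\sup_{U\in\mathcal{U}}\mathrm{diam}(U)$; $\mathcal{L}(\mathcal{U})=\sup\{d\in[0,\infty): \text{every } E\subseteq X \text{ with } \mathrm{diam}(E)<d \text{ is contained in some } U\in\mathcal{U}\}$; $\mathcal{U}$ is point-finite if each point lies in only finitely many members. $\Delta_X^{(c)}(R)=\inf\{\mathrm{diam}(\mathcal{U}): \mathcal{U} \text{ a point-finite cover of } X,\ \mathcal{L}(\mathcal{U})\geq R\}$ (infimum of the empty set is $\infty$). For $f\colon X\to Y$, $\omega_f(t)=\sup\{d_Y(f(x_1),f(x_2)): d_X(x_1,x_2)\leq t\}$, $\rho_f(t)=\inf\{d_Y(f(x_1),f(x_2)): d_X(x_1,x_2)\geq t\}$. $f$ is a coarse Lipschitz embedding if there exist $A\geq1$, $B\geq0$ with $\omega_f(t)\leq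 At+B$ and $\rho_f(t)\geq t/A-B$ for all $t$; it is a bi-Lipschitz embedding if moreover one can take $B=0$. *)

theory Defs
  imports "HOL-Analysis.Analysis"
begin

definition c0 :: "'b set \<Rightarrow> ('b \<Rightarrow> real) set" where
  "c0 I = {x. (\<forall>i. i \<notin> I \<longrightarrow> x i = 0) \<and> (\<forall>\<eta>>0. finite {i \<in> I. \<bar>x i\<bar> > \<eta>})}"

definition c0_dist :: "('b \<Rightarrow> real) \<Rightarrow> ('b \<Rightarrow> real) \<Rightarrow> real" where
  "c0_dist x y = Sup (range (\<lambda>i. \<bar>x i - y i\<bar>))"

text \<open>Diameter of a subset E (with diam of the empty set = 0).\<close>
definition mdiam :: "('a \<Rightarrow> 'a \<Rightarrow> real) \<Rightarrow> 'a set \<Rightarrow> ereal" where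
  "mdiam d E = Sup (insert 0 {ereal (d x y) | x y. x \<in> E \<and> y \<in> E})"

definition cover_diam :: "('a \<Rightarrow> 'a \<Rightarrow> real) \<Rightarrow> 'a set set \<Rightarrow> ereal" where
  "cover_diam d \<U> = Sup (insert 0 (mdiam d ` \<U>))"

definition lebesgue_number :: "'a set \<Rightarrow> ('a \<Rightarrow> 'a \<Rightarrow> real) \<Rightarrow> 'a set set \<Rightarrow> ereal" where
  "lebesgue_number X d \<U> =
     Sup {ereal r | r. 0 \<le> r \<and> (\<forall>E. E \<subseteq> X \<and> mdiam d E < ereal r \<longrightarrow> (\<exists>U\<in>\<U>. E \<subseteq> U))}"

definition is_cover :: "'a set \<Rightarrow> 'a set set \<Rightarrow> bool" where
  "is_cover X \<U> \<longleftrightarrow> (\<forall>U\<in>\<U>. U \<subseteq> X) \<and> \<Union>\<U> = X"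

definition point_finite :: "'a set \<Rightarrow> 'a set set \<Rightarrow> bool" where
  "point_finite X \<U> \<longleftrightarrow> (\<forall>x\<in>X. finite {U \<in> \<U>. x \<in> U})"

text \<open>Delta_X^(c)(R); the infimum of the empty set in ereal is \<infinity>.\<close>
definition DeltaC :: "'a set \<Rightarrow> ('a \<Rightarrow> 'a \<Rightarrow> real) \<Rightarrow> real \<Rightarrow> ereal" where
  "DeltaC X d R = Inf {cover_diam d \<U> | \<U>. is_cover X \<U> \<and> point_finite X \<U> \<and> lebesgue_number X d \<U> \<ge> ereal R}"

definition omega_mod :: "'a set \<Rightarrow> ('a \<Rightarrow> 'a \<Rightarrow> real) \<Rightarrow> ('c \<Rightarrow> 'c \<Rightarrow> real) \<Rightarrow> ('a \<Rightarrow> 'c) \<Rightarrow> real \<Rightarrow> ereal" where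
  "omega_mod X dX dY f t = Sup {ereal (dY (f x1) (f x2)) | x1 x2. x1 \<in> X \<and> x2 \<in> X \<and> dX x1 x2 \<le> t}"

definition rho_mod :: "'a set \<Rightarrow> ('a \<Rightarrow> 'a \<Rightarrow> real) \<Rightarrow> ('c \<Rightarrow> 'c \<Rightarrow> real) \<Rightarrow> ('a \<Rightarrow> 'c) \<Rightarrow> real \<Rightarrow> ereal" where
  "rho_mod X dX dY f t = Inf {ereal (dY (f x1) (f x2)) | x1 x2. x1 \<in> X \<and> x2 \<in> X \<and> dX x1 x2 \<ge> t}"

definition coarse_lipschitz_embedding ::
  "'a set \<Rightarrow> ('a \<Rightarrow> 'a \<Rightarrow> real) \<Rightarrow> ('c \<Rightarrow> 'c \<Rightarrow> real) \<Rightarrow> ('a \<Rightarrow> 'c) \<Rightarrow> bool" where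
  "coarse_lipschitz_embedding X dX dY f \<longleftrightarrow>
     (\<exists>A\<ge>1. \<exists>B\<ge>0. \<forall>t. omega_mod X dX dY f t \<le> ereal (A * t + B) \<and> rho_mod X dX dY f t \<ge> ereal (t / A - B))"

definition bilipschitz_embedding ::
  "'a set \<Rightarrow> ('a \<Rightarrow> 'a \<Rightarrow> real) \<Rightarrow> ('c \<Rightarrow> 'c \<Rightarrow> real) \<Rightarrow> ('a \<Rightarrow> 'c) \<Rightarrow> bool" where
  "bilipschitz_embedding X dX dY f \<longleftrightarrow>
     (\<exists>A\<ge>1. \<forall>t. omega_mod X dX dY f t \<le> ereal (A * t) \<and> rho_mod X dX dY f t \<ge> ereal (t / A))"

end

theory Submission
  imports Defs "HOL-Library.Nat_Bijection"
begin


lemma c0_bound: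
  assumes "x \<in> c0 I"
  shows "\<exists>M\<ge>0. \<forall>i. \<bar>x i\<bar> \<le> M"
proof -
  let ?S = "{i \<in> I. \<bar>x i\<bar> > 1}"
  have fin: "finite ?S" using assms unfolding c0_def by auto
  have z: "\<forall>i. i \<notin> I \<longrightarrow> x i = 0" using assms unfolding c0_def by auto
  define M where "M = 1 + (\<Sum>i\<in>?S. \<bar>x i\<bar>)"
  have "\<bar>x i\<bar> \<le> M" for i
  proof (cases "i \<in> ?S")
    case True
    have "\<bar>x i\<bar> \<le> (\<Sum>i\<in>?S. \<bar>x i\<bar>)"
      using member_le_sum[OF True, of "\<lambda>i. \<bar>x i\<bar>"] fin by auto
    then show ?thesis unfolding M_def by linarith
  next
    case False
    have s0: "0 \<le> (\<Sum>i\<in>?S. \<bar>x i\<bar>)" by (simp add: sum_nonneg)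
    have "\<bar>x i\<bar> \<le> 1" using False z by (cases "i \<in> I") auto
    then show ?thesis using s0 unfolding M_def by linarith
  qed
  moreover have "M \<ge> 0" unfolding M_def by (simp add: sum_nonneg add_nonneg_nonneg)
  ultimately show ?thesis by blast
qed

lemma c0_diff_bdd:
  assumes "x \<in> c0 I" "y \<in> c0 J"
  shows "bdd_above (range (\<lambda>i. \<bar>x i - y i\<bar>))"
proof -
  obtain M N where "\<forall>i. \<bar>x i\<bar> \<le> M" "\<forall>i. \<bar>y i\<bar> \<le> N"
    using c0_bound[OF assms(1)] c0_bound[OF assms(2)] by blast
  then have "\<forall>i. \<bar>x i - y i\<bar> \<le> M + N"
    by (metis abs_triangle_ineq4 add_mono order_trans)
  then show ?thesis by (auto intro: bdd_aboveI2)
qed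

lemma c0_dist_ge:
  assumes "x \<in> c0 I" "y \<in> c0 J"
  shows "\<bar>x i - y i\<bar> \<le> c0_dist x y"
  unfolding c0_dist_def by (rule cSup_upper[OF _ c0_diff_bdd[OF assms]]) auto

lemma c0_dist_nonneg:
  assumes "x \<in> c0 I" "y \<in> c0 J"
  shows "0 \<le> c0_dist x y"
  using c0_dist_ge[OF assms, of undefined] by linarith

lemma c0_dist_le:
  assumes "\<And>i. \<bar>x i - y i\<bar> \<le> M"
  shows "c0_dist x y \<le> M"
  unfolding c0_dist_def by (rule cSup_least) (use assms in auto)

lemma c0_dist_self: "c0_dist x x = 0"
  unfolding c0_dist_def by simp



lemma mdiam_le:
  assumes "\<And>x y. x \<in> E \<Longrightarrow> y \<in> E \<Longrightarrow> d x y \<le> M" "0 \<le> M"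
  shows "mdiam d E \<le> ereal M"
  unfolding mdiam_def using assms by (auto intro!: Sup_least)

lemma mdiam_ge:
  assumes "x \<in> E" "y \<in> E"
  shows "ereal (d x y) \<le> mdiam d E"
  unfolding mdiam_def using assms by (intro Sup_upper) blast

lemma cover_diam_le:
  assumes "\<And>U. U \<in> \<U> \<Longrightarrow> mdiam d U \<le> ereal M" "0 \<le> M"
  shows "cover_diam d \<U> \<le> ereal M"
  unfolding cover_diam_def using assms by (auto intro!: Sup_least)

lemma cover_diam_ge:
  assumes "U \<in> \<U>"
  shows "mdiam d U \<le> cover_diam d \<U>"
  unfolding cover_diam_def using assms by (intro Sup_upper) blast

lemma lebesgue_ge:
  assumes "0 \<le> R" "\<And>E. E \<subseteq> X \<Longrightarrow> mdiam d E < ereal R \<Longrightarrow> \<exists>U\<in>\<U>. E \<subseteq> U"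
  shows "ereal R \<le> lebesgue_number X d \<U>"
  unfolding lebesgue_number_def using assms by (auto intro!: Sup_upper)

lemma lebesgue_use:
  assumes "ereal R \<le> lebesgue_number X d \<U>" "E \<subseteq> X" "mdiam d E < ereal R"
  shows "\<exists>U\<in>\<U>. E \<subseteq> U"
proof -
  have "mdiam d E < lebesgue_number X d \<U>" using assms by (meson less_le_trans)
  then obtain z where "z \<in> {ereal r | r. 0 \<le> r \<and> (\<forall>E. E \<subseteq> X \<and> mdiam d E < ereal r \<longrightarrow> (\<exists>U\<in>\<U>. E \<subseteq> U))}" "mdiam d E < z"
    unfolding lebesgue_number_def less_Sup_iff by blast
  then show ?thesis using assms by auto
qed

lemma DeltaC_le:
  assumes "is_cover X \<U>" "point_finite X \<U>" "ereal R \<le> lebesgue_number X d \<U>"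
  shows "DeltaC X d R \<le> cover_diam d \<U>"
  unfolding DeltaC_def using assms by (auto intro!: Inf_lower)

lemma DeltaC_obtain:
  assumes "DeltaC X d R < v"
  shows "\<exists>\<U>. is_cover X \<U> \<and> point_finite X \<U> \<and> ereal R \<le> lebesgue_number X d \<U> \<and> cover_diam d \<U> < v"
  using assms unfolding DeltaC_def Inf_less_iff by auto



lemma cover_from_embedding:
  fixes f :: "'a \<Rightarrow> 'b \<Rightarrow> real"
  assumes MS: "Metric_space X d" and fX: "f ` X \<subseteq> c0 I" and A: "A > 0" "B \<ge> 0"
    and lower: "\<And>x y. x\<in>X \<Longrightarrow> y\<in>X \<Longrightarrow> d x y / A - B \<le> c0_dist (f x) (f y)"
    and s: "s > 0" and R: "R \<ge> 0"
    and upper: "\<And>x y. x\<in>X \<Longrightarrow> y\<in>X \<Longrightarrow> d x y < R \<Longrightarrow> c0_dist (f x) (f y) < s"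
  shows "DeltaC X d R \<le> ereal (A * (6 * s + B))"
proof -
  interpret M: Metric_space X d by (rule MS)
  define V where "V F k = {x \<in> X. (\<forall>i\<in>F. real_of_int (k i) \<le> f x i / s \<and> f x i / s \<le> real_of_int (k i) + 3 \<and> s < \<bar>f x i\<bar>) \<and> (\<forall>i. i \<notin> F \<longrightarrow> \<bar>f x i\<bar> < 3* s)}"
    for F and k :: "'b \<Rightarrow> int"
  define \<U> where "\<U> = {V F k | F k. finite F \<and> k \<in> F \<rightarrow>\<^sub>E UNIV}"
  have fc0: "f x \<in> c0 I" if "x \<in> X" for x using fX that by auto
  have zero_out: "f x i = 0" if "x \<in> X" "i \<notin> I" for x i
    using fc0[OF that(1)] that(2) unfolding c0_def by auto
  have fin_big: "finite {i \<in> I. \<eta> < \<bar>f x i\<bar>}" if "x \<in> X" "\<eta> > 0" for x \<eta>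
    using fc0[OF that(1)] that(2) unfolding c0_def by auto
  have key: "\<exists>U\<in>\<U>. E \<subseteq> U"
    if E: "E \<subseteq> X" "x0 \<in> E" and cl: "\<And>x i. x \<in> E \<Longrightarrow> \<bar>f x i - f x0 i\<bar> < s" for E x0
  proof -
    have x0X: "x0 \<in> X" using E by auto
    define F where "F = {i. \<exists>x\<in>E. 3* s \<le> \<bar>f x i\<bar>}"
    have FS: "F \<subseteq> {i \<in> I. s < \<bar>f x0 i\<bar>}"
    proof
      fix i assume "i \<in> F"
      then obtain x where x: "x \<in> E" "3* s \<le> \<bar>f x i\<bar>" unfolding F_def by auto
      have "\<bar>f x i - f x0 i\<bar> < s" using cl[OF x(1)] .
      then have "s < \<bar>f x0 i\<bar>" using x(2) s by linarith
      moreover have "i \<in> I"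
      proof (rule ccontr)
        assume "i \<notin> I" then have "f x0 i = 0" using zero_out x0X by blast
        then show False using \<open>s < \<bar>f x0 i\<bar>\<close> s by simp
      qed
      ultimately show "i \<in> {i \<in> I. s < \<bar>f x0 i\<bar>}" by auto
    qed
    have finF: "finite F" using finite_subset[OF FS fin_big[OF x0X s]] .
    define k where "k = restrict (\<lambda>i. \<lfloor>f x0 i / s\<rfloor> - 1) F"
    have kP: "k \<in> F \<rightarrow>\<^sub>E UNIV" unfolding k_def by auto
    have "E \<subseteq> V F k"
    proof
      fix x assume xE: "x \<in> E"
      have xX: "x \<in> X" using xE E by auto
      have inF: "real_of_int (k i) \<le> f x i / s \<and> f x i / s \<le> real_of_int (k i) + 3 \<and> s < \<bar>f x i\<bar>"
        if iF: "i \<in> F" for i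
      proof -
        obtain y where y: "y \<in> E" "3* s \<le> \<bar>f y i\<bar>" using iF unfolding F_def by auto
        have d1: "\<bar>f x i - f x0 i\<bar> < s" using cl[OF xE] .
        have d2: "\<bar>f y i - f x0 i\<bar> < s" using cl[OF y(1)] .
        have c: "s < \<bar>f x i\<bar>" using d1 d2 y(2) by linarith
        have q: "\<bar>f x i / s - f x0 i / s\<bar> < 1"
        proof -
          have "\<bar>f x i / s - f x0 i / s\<bar> = \<bar>f x i - f x0 i\<bar> / s"
            using s by (simp add: diff_divide_distrib[symmetric])
          also have "\<dots> < 1" using d1 s by simp
          finally show ?thesis .
        qed
        have kk: "real_of_int (k i) = real_of_int \<lfloor>f x0 i / s\<rfloor> - 1" unfolding k_def using iF by simp
        have f1: "real_of_int \<lfloor>f x0 i / s\<rfloor> \<le> f x0 i / s" by (rule of_int_floor_le)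
        have f2: "f x0 i / s < real_of_int \<lfloor>f x0 i / s\<rfloor> + 1" by (rule real_of_int_floor_add_one_gt)
        show ?thesis using q kk f1 f2 c by linarith
      qed
      have outF: "\<bar>f x i\<bar> < 3* s" if "i \<notin> F" for i
      proof -
        have "\<not> 3 * s \<le> \<bar>f x i\<bar>" using that xE unfolding F_def by blast
        then show ?thesis by linarith
      qed
      show "x \<in> V F k" unfolding V_def using xX inF outF by blast
    qed
    moreover have "V F k \<in> \<U>" unfolding \<U>_def using finF kP by blast
    ultimately show ?thesis by blast
  qed
  have cov: "is_cover X \<U>"
    unfolding is_cover_def
  proof
    show "\<forall>U\<in>\<U>. U \<subseteq> X" unfolding \<U>_def V_def by auto
    show "\<Union> \<U> = X"
    proof
      show "\<Union> \<U> \<subseteq> X" unfolding \<U>_def V_def by auto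
      show "X \<subseteq> \<Union> \<U>"
      proof
        fix x assume "x \<in> X"
        then have "\<exists>U\<in>\<U>. {x} \<subseteq> U" using key[of "{x}" x] s by auto
        then show "x \<in> \<Union> \<U>" by auto
      qed
    qed
  qed
  have pf: "point_finite X \<U>"
    unfolding point_finite_def
  proof
    fix x assume xX: "x \<in> X"
    define S where "S = {i \<in> I. s < \<bar>f x i\<bar>}"
    have finS: "finite S" unfolding S_def using fin_big[OF xX s] .
    obtain M where M: "M \<ge> 0" "\<forall>i. \<bar>f x i\<bar> \<le> M" using c0_bound[OF fc0[OF xX]] by blast
    define N where "N = \<lceil>M / s\<rceil> + 3"
    define P where "P = Sigma (Pow S) (\<lambda>F. F \<rightarrow>\<^sub>E {-N..N})"
    have finP: "finite P" unfolding P_def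
    proof (rule finite_SigmaI)
      show "finite (Pow S)" using finS by simp
      fix F assume "F \<in> Pow S"
      then have "finite F" using finS finite_subset by blast
      then show "finite (F \<rightarrow>\<^sub>E {-N..N})" by (rule finite_PiE) simp
    qed
    have "{U \<in> \<U>. x \<in> U} \<subseteq> (\<lambda>(F,k). V F k) ` P"
    proof
      fix U assume "U \<in> {U \<in> \<U>. x \<in> U}"
      then obtain F k where U: "U = V F k" "finite F" "k \<in> F \<rightarrow>\<^sub>E UNIV" "x \<in> V F k"
        unfolding \<U>_def by auto
      have FS: "F \<subseteq> S"
      proof
        fix i assume iF: "i \<in> F"
        then have "s < \<bar>f x i\<bar>" using U(4) unfolding V_def by auto
        moreover have "i \<in> I"
        proof (rule ccontr)
          assume "i \<notin> I" then have "f x i = 0" using zero_out xX by blast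
          then show False using \<open>s < \<bar>f x i\<bar>\<close> s by simp
        qed
        ultimately show "i \<in> S" unfolding S_def by auto
      qed
      have kr: "k i \<in> {-N..N}" if iF: "i \<in> F" for i
      proof -
        have b: "real_of_int (k i) \<le> f x i / s" "f x i / s \<le> real_of_int (k i) + 3"
          using U(4) iF unfolding V_def by auto
        have m1: "f x i / s \<le> M / s" using M(2) s by (intro divide_right_mono) (auto simp: abs_le_iff)
        have m2: "- M / s \<le> f x i / s" using M(2)[rule_format, of i] s by (intro divide_right_mono) (auto simp: abs_le_iff)
        have m3: "M / s \<le> real_of_int \<lceil>M / s\<rceil>" by (rule le_of_int_ceiling)
        have "real_of_int (k i) \<le> real_of_int \<lceil>M / s\<rceil>" using b m1 m3 by linarith
        then have k1: "k i \<le> \<lceil>M / s\<rceil>" by (simp only: of_int_le_iff)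
        have "real_of_int (- \<lceil>M / s\<rceil> - 3) \<le> real_of_int (k i)" using b m2 m3 by (simp only: of_int_diff of_int_minus of_int_numeral)
        then have k2: "- \<lceil>M / s\<rceil> - 3 \<le> k i" by (simp only: of_int_le_iff)
        have "k i \<le> N" "- N \<le> k i" using k1 k2 unfolding N_def by linarith+
        then show ?thesis by simp
      qed
      have "k \<in> F \<rightarrow>\<^sub>E {-N..N}" using U(3) kr by (auto simp: PiE_iff)
      then have "(F, k) \<in> P" unfolding P_def using FS by auto
      moreover have "U = (\<lambda>(F,k). V F k) (F,k)" using U(1) by simp
      ultimately show "U \<in> (\<lambda>(F,k). V F k) ` P" by (rule rev_image_eqI)
    qed
    then show "finite {U \<in> \<U>. x \<in> U}" by (rule finite_subset[OF _ finite_imageI[OF finP]])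
  qed
  have leb: "ereal R \<le> lebesgue_number X d \<U>"
  proof (rule lebesgue_ge[OF R])
    fix E assume E: "E \<subseteq> X" "mdiam d E < ereal R"
    show "\<exists>U\<in>\<U>. E \<subseteq> U"
    proof (cases "E = {}")
      case True
      have "V {} (\<lambda>_. undefined) \<in> \<U>" unfolding \<U>_def
        by (intro CollectI exI[of _ "{}"] exI[of _ "\<lambda>_. undefined"]) auto
      then show ?thesis using True by blast
    next
      case False
      then obtain x0 where x0: "x0 \<in> E" by auto
      have "\<bar>f x i - f x0 i\<bar> < s" if xE: "x \<in> E" for x i
      proof -
        have "ereal (d x x0) < ereal R" using mdiam_ge[OF xE x0, of d] E(2) by (meson le_less_trans)
        then have "d x x0 < R" by simp
        moreover have xX0: "x \<in> X" "x0 \<in> X" using E xE x0 by auto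
        ultimately have "c0_dist (f x) (f x0) < s" using upper by blast
        moreover have "\<bar>f x i - f x0 i\<bar> \<le> c0_dist (f x) (f x0)"
          by (rule c0_dist_ge[OF fc0[OF xX0(1)] fc0[OF xX0(2)]])
        ultimately show ?thesis by linarith
      qed
      then show ?thesis using key[OF E(1) x0] by blast
    qed
  qed
  have diam: "cover_diam d \<U> \<le> ereal (A * (6 * s + B))"
  proof (rule cover_diam_le)
    show "0 \<le> A * (6 * s + B)" using A s by simp
    fix U assume "U \<in> \<U>"
    then obtain F k where U: "U = V F k" unfolding \<U>_def by auto
    show "mdiam d U \<le> ereal (A * (6 * s + B))"
    proof (rule mdiam_le)
      show "0 \<le> A * (6 * s + B)" using A s by simp
      fix x y assume xy: "x \<in> U" "y \<in> U"
      have xX: "x \<in> X" "y \<in> X" using xy U unfolding V_def by auto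
      have "\<bar>f x i - f y i\<bar> \<le> 6* s" for i
      proof (cases "i \<in> F")
        case True
        then have b: "real_of_int (k i) \<le> f x i / s" "f x i / s \<le> real_of_int (k i) + 3"
             "real_of_int (k i) \<le> f y i / s" "f y i / s \<le> real_of_int (k i) + 3"
          using xy U unfolding V_def by auto
        have "\<bar>f x i / s - f y i / s\<bar> \<le> 3" using b by linarith
        moreover have "\<bar>f x i / s - f y i / s\<bar> = \<bar>f x i - f y i\<bar> / s"
          using s by (simp add: diff_divide_distrib[symmetric])
        ultimately have "\<bar>f x i - f y i\<bar> \<le> 3 * s" using s by (simp add: divide_le_eq)
        then show ?thesis using s by linarith
      next
        case False
        then have "\<bar>f x i\<bar> < 3* s" "\<bar>f y i\<bar> < 3* s" using xy U unfolding V_def by auto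
        then show ?thesis by linarith
      qed
      then have "c0_dist (f x) (f y) \<le> 6* s" by (rule c0_dist_le)
      then have "d x y / A - B \<le> 6* s" using lower[OF xX] by linarith
      then show "d x y \<le> A * (6 * s + B)" using A by (simp add: field_simps)
    qed
  qed
  show ?thesis using DeltaC_le[OF cov pf leb] diam by (rule order_trans)
qed



definition sc :: "int \<Rightarrow> real" where "sc k = 2 powr (real_of_int k)"

lemma sc_pos: "0 < sc k" unfolding sc_def by simp

lemma sc_exists:
  assumes "s > 0" shows "\<exists>k. s / 2 < sc k \<and> sc k \<le> s"
proof -
  define k where "k = \<lfloor>log 2 s\<rfloor>"
  have "real_of_int k \<le> log 2 s" unfolding k_def by (rule of_int_floor_le)
  then have a: "sc k \<le> s" unfolding sc_def using assms by (simp add: le_log_iff)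
  have "log 2 s - 1 < real_of_int k" unfolding k_def by linarith
  then have "2 powr (log 2 s - 1) < sc k" unfolding sc_def by simp
  moreover have "2 powr (log 2 s - 1) = s / 2" using assms by (simp add: powr_diff)
  ultimately show ?thesis using a by auto
qed

lemma sc_finite:
  assumes "\<eta> > 0" shows "finite {k. \<eta> < sc k \<and> sc k < M}"
proof (cases "M > 0")
  case True
  have "{k. \<eta> < sc k \<and> sc k < M} \<subseteq> {\<lfloor>log 2 \<eta>\<rfloor> .. \<lceil>log 2 M\<rceil>}"
  proof
    fix k assume "k \<in> {k. \<eta> < sc k \<and> sc k < M}"
    then have "\<eta> < 2 powr real_of_int k" "2 powr real_of_int k < M" unfolding sc_def by auto
    then have "log 2 \<eta> < real_of_int k" "real_of_int k < log 2 M"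
      using assms True by (simp_all add: log_less_iff less_log_iff)
    then have "\<lfloor>log 2 \<eta>\<rfloor> \<le> k" "k \<le> \<lceil>log 2 M\<rceil>" by linarith+
    then show "k \<in> {\<lfloor>log 2 \<eta>\<rfloor> .. \<lceil>log 2 M\<rceil>}" by simp
  qed
  then show ?thesis by (rule finite_subset) simp
next
  case False
  then have "{k. \<eta> < sc k \<and> sc k < M} = {}" using sc_pos by (smt (verit) Collect_empty_eq)
  then show ?thesis by (metis finite.emptyI)
qed

definition hfun :: "'a set \<Rightarrow> ('a \<Rightarrow> 'a \<Rightarrow> real) \<Rightarrow> real \<Rightarrow> 'a set \<Rightarrow> 'a \<Rightarrow> real" where
  "hfun X d r U x = Inf (insert r ((\<lambda>z. d x z) ` (X - U)))"

context Metric_space begin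

lemma hfun_bdd: "bdd_below (insert r ((\<lambda>z. d x z) ` (M - U)))"
  by (rule bdd_belowI[of _ "min r 0"]) (auto simp: min_le_iff_disj)

lemma hfun_le_r: "hfun M d r U x \<le> r"
  unfolding hfun_def by (rule cInf_lower[OF _ hfun_bdd]) auto

lemma hfun_nonneg: "0 \<le> r \<Longrightarrow> 0 \<le> hfun M d r U x"
  unfolding hfun_def by (rule cInf_greatest) auto

lemma hfun_zero: "0 \<le> r \<Longrightarrow> x \<in> M \<Longrightarrow> x \<notin> U \<Longrightarrow> hfun M d r U x = 0"
proof -
  assume a: "0 \<le> r" "x \<in> M" "x \<notin> U"
  have "d x x \<in> insert r ((\<lambda>z. d x z) ` (M - U))" using a by blast
  then have "hfun M d r U x \<le> d x x" unfolding hfun_def by (rule cInf_lower[OF _ hfun_bdd])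
  then show ?thesis using hfun_nonneg[OF a(1), of U x] a by simp
qed

lemma hfun_lip: "x \<in> M \<Longrightarrow> y \<in> M \<Longrightarrow> hfun M d r U x \<le> hfun M d r U y + d x y"
proof -
  assume xy: "x \<in> M" "y \<in> M"
  have "hfun M d r U x - d x y \<le> hfun M d r U y"
    unfolding hfun_def
  proof (rule cInf_greatest)
    show "insert r ((\<lambda>z. d y z) ` (M - U)) \<noteq> {}" by simp
    fix e assume "e \<in> insert r ((\<lambda>z. d y z) ` (M - U))"
    then consider "e = r" | z where "z \<in> M - U" "e = d y z" by auto
    then show "Inf (insert r ((\<lambda>z. d x z) ` (M - U))) - d x y \<le> e"
    proof cases
      case 1
      have "Inf (insert r ((\<lambda>z. d x z) ` (M - U))) \<le> r" by (rule cInf_lower[OF _ hfun_bdd]) auto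
      then show ?thesis using 1 nonneg[of x y] by linarith
    next
      case 2
      have "Inf (insert r ((\<lambda>z. d x z) ` (M - U))) \<le> d x z" by (rule cInf_lower[OF _ hfun_bdd]) (use 2 in auto)
      moreover have "d x z \<le> d x y + d y z" using triangle xy 2 by auto
      ultimately show ?thesis using 2 by linarith
    qed
  qed
  then show ?thesis by linarith
qed

lemma hfun_ball:
  assumes "0 \<le> r'" "r' \<le> r" "\<And>z. z \<in> M \<Longrightarrow> d x z < r' \<Longrightarrow> z \<in> U"
  shows "r' \<le> hfun M d r U x"
  unfolding hfun_def
proof (rule cInf_greatest)
  show "insert r ((\<lambda>z. d x z) ` (M - U)) \<noteq> {}" by simp
  fix e assume "e \<in> insert r ((\<lambda>z. d x z) ` (M - U))"
  then consider "e = r" | z where "z \<in> M - U" "e = d x z" by auto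
  then show "r' \<le> e"
  proof cases
    case 1 then show ?thesis using assms by simp
  next
    case 2 then show ?thesis using assms(3)[of z] by (cases "d x z < r'") auto
  qed
qed

end



lemma min_lip: "\<bar>a - a'\<bar> \<le> e \<Longrightarrow> \<bar>b - b'\<bar> \<le> e \<Longrightarrow> \<bar>min a b - min a' b'\<bar> \<le> (e::real)"
  by (simp add: min_def abs_le_iff)

lemma max0_lip: "\<bar>max 0 u - max 0 u'\<bar> \<le> \<bar>u - (u'::real)\<bar>"
  by (simp add: max_def abs_le_iff) linarith

lemma embed_from_covers:
  fixes X :: "'a set" and d :: "'a \<Rightarrow> 'a \<Rightarrow> real" and g :: "nat \<times> 'a set \<Rightarrow> 'b"
  assumes MS: "Metric_space X d" and C: "C \<ge> 0" and D: "D \<ge> 0"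
    and DC: "\<And>R. R \<ge> 0 \<Longrightarrow> DeltaC X d R \<le> ereal (C*R + D)"
    and x0: "x0 \<in> X" and g: "inj g"
  shows "\<exists>f::'a \<Rightarrow> 'b \<Rightarrow> real. f ` X \<subseteq> c0 UNIV \<and> (\<forall>x\<in>X. \<forall>y\<in>X. c0_dist (f x) (f y) \<le> d x y)
     \<and> (\<forall>x\<in>X. \<forall>y\<in>X. 2*D \<le> d x y \<longrightarrow> (min (3/8) (1/(2*(C+1))) / 6) * d x y \<le> c0_dist (f x) (f y))"
proof -
  interpret M: Metric_space X d by (rule MS)
  define P where "P k \<U> \<longleftrightarrow> is_cover X \<U> \<and> point_finite X \<U> \<and> ereal (sc k) \<le> lebesgue_number X d \<U>
       \<and> cover_diam d \<U> < ereal ((C+1)* sc k + D)" for k \<U>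
  define Cov where "Cov k = (SOME \<U>. P k \<U>)" for k
  have Cov: "P k (Cov k)" for k
  proof -
    have "DeltaC X d (sc k) \<le> ereal (C * sc k + D)" using DC sc_pos[of k] by simp
    also have "\<dots> < ereal ((C+1)* sc k + D)" using sc_pos[of k] by (simp add: algebra_simps)
    finally have "\<exists>\<U>. P k \<U>" unfolding P_def by (rule DeltaC_obtain)
    then show ?thesis unfolding Cov_def by (rule someI_ex)
  qed
  define \<phi> where "\<phi> k U x = min (hfun X d (sc k) U x) (max 0 (d x x0 - sc k))" for k U x
  define g' where "g' = (\<lambda>(k::int, U::'a set). g (int_encode k, U))"
  have injg': "inj g'"
  proof (rule injI)
    fix p q assume "g' p = g' q"
    then show "p = q" using g unfolding g'_def by (cases p, cases q) (auto simp: inj_eq int_encode_eq)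
  qed
  define f where "f x b = (if b \<in> range g' then (case inv g' b of (k,U) \<Rightarrow> if U \<in> Cov k then \<phi> k U x else 0) else 0)" for x b
  have f1: "f x (g' (k,U)) = (if U \<in> Cov k then \<phi> k U x else 0)" for x k U
    unfolding f_def using inv_f_f[OF injg', of "(k,U)"] by simp
  have f2: "b \<notin> range g' \<Longrightarrow> f x b = 0" for x b unfolding f_def by simp
  have \<phi>_nonneg: "0 \<le> \<phi> k U x" for k U x
    unfolding \<phi>_def using M.hfun_nonneg[of "sc k" U x] sc_pos[of k] by simp
  have \<phi>_le: "\<phi> k U x \<le> sc k" for k U x
    unfolding \<phi>_def using M.hfun_le_r[of "sc k" U x] by simp
  have \<phi>_lip: "\<bar>\<phi> k U x - \<phi> k U y\<bar> \<le> d x y" if "x \<in> X" "y \<in> X" for k U x y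
  proof -
    have "\<bar>hfun X d (sc k) U x - hfun X d (sc k) U y\<bar> \<le> d x y"
      using M.hfun_lip[OF that, of "sc k" U] M.hfun_lip[OF that(2,1), of "sc k" U] M.commute[of x y]
      by (simp add: abs_le_iff)
    moreover have "\<bar>max 0 (d x x0 - sc k) - max 0 (d y x0 - sc k)\<bar> \<le> d x y"
    proof -
      have "d x x0 \<le> d x y + d y x0" "d y x0 \<le> d y x + d x x0" using M.triangle that x0 by auto
      then have "\<bar>(d x x0 - sc k) - (d y x0 - sc k)\<bar> \<le> d x y" using M.commute[of x y] by (simp add: abs_le_iff)
      then show ?thesis using max0_lip order_trans by blast
    qed
    ultimately show ?thesis unfolding \<phi>_def by (rule min_lip)
  qed
  have \<phi>_pos: "x \<in> U \<and> sc k < d x x0" if "x \<in> X" "0 < \<phi> k U x" for k U x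
  proof
    show "x \<in> U"
    proof (rule ccontr)
      assume "x \<notin> U"
      then have "hfun X d (sc k) U x = 0" using M.hfun_zero[of "sc k" x U] sc_pos[of k] that by simp
      then show False using that unfolding \<phi>_def by simp
    qed
    show "sc k < d x x0" using that unfolding \<phi>_def by (simp add: max_def split: if_splits)
  qed
  have f_lip: "\<bar>f x b - f y b\<bar> \<le> d x y" if "x \<in> X" "y \<in> X" for x y b
  proof (cases "b \<in> range g'")
    case True
    then obtain k U where b: "b = g' (k,U)" by auto
    show ?thesis unfolding b f1 using \<phi>_lip[OF that] by simp
  next
    case False then show ?thesis using f2 by simp
  qed
  have f_c0: "f x \<in> c0 UNIV" if xX: "x \<in> X" for x
    unfolding c0_def
  proof (intro CollectI conjI allI impI)
    fix i :: 'b assume "i \<notin> UNIV" then show "f x i = 0" by simp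
  next
    fix \<eta> :: real assume eta: "0 < \<eta>"
    define K where "K = {k. \<eta> < sc k \<and> sc k < d x x0}"
    have finK: "finite K" unfolding K_def by (rule sc_finite[OF eta])
    have "{i \<in> UNIV. \<eta> < \<bar>f x i\<bar>} \<subseteq> g' ` (Sigma K (\<lambda>k. {U \<in> Cov k. x \<in> U}))"
    proof
      fix i assume "i \<in> {i \<in> UNIV. \<eta> < \<bar>f x i\<bar>}"
      then have i: "\<eta> < \<bar>f x i\<bar>" by simp
      then have "i \<in> range g'" using f2 eta by fastforce
      then obtain k U where b: "i = g' (k,U)" by auto
      have UC: "U \<in> Cov k" using i eta unfolding b f1 by (cases "U \<in> Cov k") auto
      then have ph: "\<eta> < \<phi> k U x" using i \<phi>_nonneg[of k U x] unfolding b f1 by simp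
      then have "x \<in> U \<and> sc k < d x x0" using \<phi>_pos[OF xX] eta by (meson less_trans)
      moreover have "\<eta> < sc k" using ph \<phi>_le[of k U x] by linarith
      ultimately have "(k,U) \<in> Sigma K (\<lambda>k. {U \<in> Cov k. x \<in> U})" unfolding K_def using UC by simp
      then show "i \<in> g' ` (Sigma K (\<lambda>k. {U \<in> Cov k. x \<in> U}))" unfolding b by (rule imageI)
    qed
    moreover have "finite (Sigma K (\<lambda>k. {U \<in> Cov k. x \<in> U}))"
    proof (rule finite_SigmaI[OF finK])
      fix k show "finite {U \<in> Cov k. x \<in> U}" using Cov[of k] xX unfolding P_def point_finite_def by blast
    qed
    ultimately show "finite {i \<in> UNIV. \<eta> < \<bar>f x i\<bar>}" using finite_subset finite_imageI by blast
  qed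
  define \<alpha> where "\<alpha> = min (3/8) (1/(2*(C+1)))"
  have \<alpha>pos: "0 < \<alpha>" unfolding \<alpha>_def using C by simp
  have \<alpha>1: "\<alpha> \<le> 3/8" unfolding \<alpha>_def by simp
  have \<alpha>2: "(C+1)*\<alpha> \<le> 1/2"
  proof -
    have "\<alpha> \<le> 1/(2*(C+1))" unfolding \<alpha>_def by simp
    then have "(C+1)*\<alpha> \<le> (C+1)*(1/(2*(C+1)))" using C by (intro mult_left_mono) auto
    also have "\<dots> = 1/2" using C by simp
    finally show ?thesis .
  qed
  have low: "\<exists>b. \<alpha>/6 * d x y \<le> \<bar>f x b - f y b\<bar>"
    if xy: "x \<in> X" "y \<in> X" and tpos: "0 < d x y" and tD: "2*D \<le> d x y" and far: "d x y / 2 \<le> d x x0" for x y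
  proof -
    define t where "t = d x y"
    obtain k where k: "\<alpha>*t/2 < sc k" "sc k \<le> \<alpha>*t" using sc_exists[of "\<alpha>*t"] \<alpha>pos tpos unfolding t_def by auto
    define r where "r = sc k"
    have rpos: "0 < r" unfolding r_def by (rule sc_pos)
    define E where "E = {z \<in> X. d x z < r/3}"
    have EX: "E \<subseteq> X" unfolding E_def by auto
    have xE: "x \<in> E" unfolding E_def using xy rpos by simp
    have "mdiam d E \<le> ereal (2*r/3)"
    proof (rule mdiam_le)
      show "0 \<le> 2*r/3" using rpos by simp
      fix z w assume "z \<in> E" "w \<in> E"
      then have "z \<in> X" "w \<in> X" "d x z < r/3" "d x w < r/3" unfolding E_def by auto
      moreover have "d z w \<le> d z x + d x w" using M.triangle xy calculation by auto
      ultimately show "d z w \<le> 2*r/3" using M.commute[of z x] by linarith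
    qed
    also have "\<dots> < ereal r" using rpos by simp
    finally have "mdiam d E < ereal r" .
    then obtain U where U: "U \<in> Cov k" "E \<subseteq> U"
      using lebesgue_use[of "sc k" X d "Cov k" E] Cov[of k] EX unfolding P_def r_def by blast
    have "(C+1)*r + D \<le> t"
    proof -
      have "(C+1)*r \<le> (C+1)*(\<alpha>*t)" using k C unfolding r_def by (intro mult_left_mono) auto
      also have "\<dots> = ((C+1)*\<alpha>)*t" by simp
      also have "\<dots> \<le> (1/2)*t" using \<alpha>2 tpos unfolding t_def by (intro mult_right_mono) auto
      finally show ?thesis using tD unfolding t_def by linarith
    qed
    have yU: "y \<notin> U"
    proof
      assume "y \<in> U"
      then have "ereal t \<le> mdiam d U" unfolding t_def using mdiam_ge[of x U y d] U xE by auto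
      also have "\<dots> \<le> cover_diam d (Cov k)" by (rule cover_diam_ge[OF U(1)])
      also have "\<dots> < ereal ((C+1)*r + D)" using Cov[of k] unfolding P_def r_def by simp
      finally show False using \<open>(C+1)*r + D \<le> t\<close> by simp
    qed
    have h1: "r/3 \<le> hfun X d (sc k) U x"
      using U(2) rpos unfolding r_def E_def by (intro M.hfun_ball) auto
    have "\<alpha> * d x y \<le> 3/8 * d x y" using \<alpha>1 tpos by (intro mult_right_mono) auto
    then have h2: "r/3 \<le> d x x0 - sc k" using far k unfolding r_def t_def by linarith
    have h3: "r/3 \<le> max 0 (d x x0 - sc k)" using h2 by (simp add: le_max_iff_disj)
    have px: "r/3 \<le> \<phi> k U x" unfolding \<phi>_def using h1 h3 unfolding r_def by (simp only: min.bounded_iff)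
    have py: "\<phi> k U y = 0"
      using M.hfun_zero[of "sc k" y U] sc_pos[of k] xy yU \<phi>_nonneg[of k U y] unfolding \<phi>_def by simp
    have "\<alpha>/6 * t \<le> r/3" using k unfolding r_def by simp
    then have "\<alpha>/6 * d x y \<le> \<bar>f x (g' (k,U)) - f y (g' (k,U))\<bar>"
      unfolding f1 using U(1) px py unfolding t_def by simp
    then show ?thesis by blast
  qed
  show ?thesis
  proof (intro exI conjI ballI impI)
    show "f ` X \<subseteq> c0 UNIV" using f_c0 by auto
  next
    fix x y assume xy: "x \<in> X" "y \<in> X"
    show "c0_dist (f x) (f y) \<le> d x y" by (rule c0_dist_le) (rule f_lip[OF xy])
  next
    fix x y assume xy: "x \<in> X" "y \<in> X" and tD: "2*D \<le> d x y"
    have nn: "0 \<le> c0_dist (f x) (f y)" by (rule c0_dist_nonneg[OF f_c0[OF xy(1)] f_c0[OF xy(2)]])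
    have "\<alpha>/6 * d x y \<le> c0_dist (f x) (f y)"
    proof (cases "d x y = 0")
      case True then show ?thesis using nn by simp
    next
      case False
      then have tpos: "0 < d x y" using M.nonneg[of x y] by linarith
      have "d x y \<le> d x x0 + d x0 y" using M.triangle xy x0 by auto
      then consider "d x y / 2 \<le> d x x0" | "d y x / 2 \<le> d y x0" using M.commute[of x0 y] M.commute[of x y] by linarith
      then obtain b where b: "\<alpha>/6 * d x y \<le> \<bar>f x b - f y b\<bar>"
      proof cases
        case 1 then show ?thesis using low[OF xy tpos tD] that by blast
      next
        case 2
        have "0 < d y x" "2*D \<le> d y x" using tpos tD M.commute[of x y] by auto
        then obtain b where "\<alpha>/6 * d y x \<le> \<bar>f y b - f x b\<bar>" using low[OF xy(2,1)] 2 by blast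
        then show ?thesis using that M.commute[of x y] by (simp add: abs_minus_commute)
      qed
      also have "\<dots> \<le> c0_dist (f x) (f y)" by (rule c0_dist_ge[OF f_c0[OF xy(1)] f_c0[OF xy(2)]])
      finally show ?thesis .
    qed
    then show "min (3/8) (1/(2*(C+1))) / 6 * d x y \<le> c0_dist (f x) (f y)" unfolding \<alpha>_def .
  qed
qed



lemma omega_use:
  assumes "x \<in> X" "y \<in> X"
  shows "ereal (dY (f x) (f y)) \<le> omega_mod X dX dY f (dX x y)"
  unfolding omega_mod_def using assms by (intro Sup_upper) blast

lemma rho_use:
  assumes "x \<in> X" "y \<in> X"
  shows "rho_mod X dX dY f (dX x y) \<le> ereal (dY (f x) (f y))"
  unfolding rho_mod_def using assms by (intro Inf_lower) blast

lemma fwd: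
  fixes f :: "'a \<Rightarrow> 'b \<Rightarrow> real"
  assumes MS: "Metric_space X d" and fX: "f ` X \<subseteq> c0 I" and A: "A \<ge> 1" and B: "B \<ge> 0"
    and om: "\<And>t. omega_mod X d c0_dist f t \<le> ereal (A * t + B)"
    and rh: "\<And>t. ereal (t / A - B) \<le> rho_mod X d c0_dist f t"
  shows "\<forall>R\<ge>0. DeltaC X d R \<le> ereal ((6*A*A) * R + A*(7*B+6))"
    and "B = 0 \<Longrightarrow> \<forall>R\<ge>0. DeltaC X d R \<le> ereal ((6*A*A) * R)"
proof -
  interpret M: Metric_space X d by (rule MS)
  have lower: "d x y / A - B \<le> c0_dist (f x) (f y)" if "x \<in> X" "y \<in> X" for x y
  proof -
    have "ereal (d x y / A - B) \<le> ereal (c0_dist (f x) (f y))"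
      using rh[of "d x y"] rho_use[OF that, of d c0_dist f] by (rule order_trans)
    then show ?thesis by simp
  qed
  have upper: "c0_dist (f x) (f y) \<le> A * d x y + B" if "x \<in> X" "y \<in> X" for x y
  proof -
    have "ereal (c0_dist (f x) (f y)) \<le> ereal (A * d x y + B)"
      using omega_use[OF that, of c0_dist f d] om[of "d x y"] by (rule order_trans)
    then show ?thesis by simp
  qed
  have Apos: "A > 0" using A by simp
  show "\<forall>R\<ge>0. DeltaC X d R \<le> ereal ((6*A*A) * R + A*(7*B+6))"
  proof (intro allI impI)
    fix R :: real assume R: "R \<ge> 0"
    have "DeltaC X d R \<le> ereal (A * (6 * (A*R + B + 1) + B))"
    proof (rule cover_from_embedding[OF MS fX Apos B lower _ R])
      show "0 < A*R + B + 1" using A B R by (simp add: add_nonneg_pos)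
      fix x y assume xy: "x \<in> X" "y \<in> X" "d x y < R"
      have "A * d x y \<le> A * R" using xy A by (intro mult_left_mono) auto
      then show "c0_dist (f x) (f y) < A*R + B + 1" using upper[OF xy(1,2)] by linarith
    qed
    also have "A * (6 * (A*R + B + 1) + B) = (6*A*A) * R + A*(7*B+6)" by (simp add: algebra_simps)
    finally show "DeltaC X d R \<le> ereal ((6*A*A) * R + A*(7*B+6))" .
  qed
  assume B0: "B = 0"
  show "\<forall>R\<ge>0. DeltaC X d R \<le> ereal ((6*A*A) * R)"
  proof (intro allI impI)
    fix R :: real assume R: "R \<ge> 0"
    show "DeltaC X d R \<le> ereal ((6*A*A) * R)"
    proof (cases "R = 0")
      case False
      then have Rp: "R > 0" using R by simp
      have "DeltaC X d R \<le> ereal (A * (6 * (A*R) + B))"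
      proof (rule cover_from_embedding[OF MS fX Apos B lower _ R])
        show "0 < A*R" using Apos Rp by simp
        fix x y assume xy: "x \<in> X" "y \<in> X" "d x y < R"
        have "A * d x y < A * R" using xy Apos by simp
        then show "c0_dist (f x) (f y) < A*R" using upper[OF xy(1,2)] B0 by linarith
      qed
      then show ?thesis using B0 by (simp add: algebra_simps)
    next
      case True
      show ?thesis unfolding True
      proof (rule ereal_le_epsilon2)
        fix e :: real assume e: "0 < e"
        have "DeltaC X d 0 \<le> ereal (A * (6 * (e/(6*A)) + B))"
        proof (rule cover_from_embedding[OF MS fX Apos B lower _ order_refl])
          show "0 < e/(6*A)" using e Apos by simp
          fix x y assume "x \<in> X" "y \<in> X" "d x y < 0"
          then show "c0_dist (f x) (f y) < e/(6*A)" using M.nonneg[of x y] by linarith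
        qed
        also have "A * (6 * (e/(6*A)) + B) = e" using Apos B0 by simp
        finally show "DeltaC X d 0 \<le> ereal (6 * A * A * 0) + ereal e" by simp
      qed
    qed
  qed
qed

lemma bwd:
  fixes X :: "'a set" and d :: "'a \<Rightarrow> 'a \<Rightarrow> real" and g :: "nat \<times> 'a set \<Rightarrow> 'b"
  assumes MS: "Metric_space X d" and C: "C \<ge> 0" and D: "D \<ge> 0"
    and DC: "\<And>R. R \<ge> 0 \<Longrightarrow> DeltaC X d R \<le> ereal (C*R + D)" and g: "inj g"
  shows "\<exists>(f::'a \<Rightarrow> 'b \<Rightarrow> real) A. A \<ge> 1 \<and> f ` X \<subseteq> c0 UNIV \<and>
    (\<forall>t. omega_mod X d c0_dist f t \<le> ereal (A * t + 2*D) \<and> ereal (t / A - 2*D) \<le> rho_mod X d c0_dist f t)"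
proof (cases "X = {}")
  case True
  show ?thesis
    by (rule exI[of _ "\<lambda>_ _. 0"], rule exI[of _ 1]) (simp add: True omega_mod_def rho_mod_def)
next
  case False
  interpret M: Metric_space X d by (rule MS)
  obtain x0 where x0: "x0 \<in> X" using False by auto
  define \<beta> where "\<beta> = min (3/8) (1/(2*(C+1))) / 6"
  have \<beta>: "0 < \<beta>" unfolding \<beta>_def using C by simp
  obtain f :: "'a \<Rightarrow> 'b \<Rightarrow> real" where fX: "f ` X \<subseteq> c0 UNIV"
    and up: "\<forall>x\<in>X. \<forall>y\<in>X. c0_dist (f x) (f y) \<le> d x y"
    and lo: "\<forall>x\<in>X. \<forall>y\<in>X. 2*D \<le> d x y \<longrightarrow> \<beta> * d x y \<le> c0_dist (f x) (f y)"
    using embed_from_covers[OF MS C D DC x0 g] unfolding \<beta>_def by blast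
  define A where "A = max 1 (1/\<beta>)"
  have A1: "A \<ge> 1" unfolding A_def by simp
  have Ab: "d' / A \<le> \<beta> * d'" if "0 \<le> d'" for d'
  proof -
    have "1/\<beta> \<le> A" unfolding A_def by simp
    then have "1/A \<le> \<beta>" using \<beta> A1 by (simp add: field_simps)
    then have "(1/A) * d' \<le> \<beta> * d'" using that by (intro mult_right_mono) auto
    then show ?thesis by simp
  qed
  show ?thesis
  proof (intro exI conjI allI)
    show "A \<ge> 1" by (rule A1)
    show "f ` X \<subseteq> c0 UNIV" by (rule fX)
    fix t :: real
    show "omega_mod X d c0_dist f t \<le> ereal (A * t + 2*D)"
      unfolding omega_mod_def
    proof (rule Sup_least)
      fix e assume "e \<in> {ereal (c0_dist (f x1) (f x2)) |x1 x2. x1 \<in> X \<and> x2 \<in> X \<and> d x1 x2 \<le> t}"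
      then obtain x1 x2 where e: "e = ereal (c0_dist (f x1) (f x2))" "x1 \<in> X" "x2 \<in> X" "d x1 x2 \<le> t" by blast
      have "0 \<le> t" using e M.nonneg[of x1 x2] by linarith
      then have "t \<le> A * t" using A1 by (simp add: mult_le_cancel_right1)
      moreover have "c0_dist (f x1) (f x2) \<le> d x1 x2" using up e(2,3) by blast
      ultimately have "c0_dist (f x1) (f x2) \<le> A * t + 2*D" using e(4) D by linarith
      then show "e \<le> ereal (A * t + 2*D)" using e(1) by simp
    qed
    show "ereal (t / A - 2*D) \<le> rho_mod X d c0_dist f t"
      unfolding rho_mod_def
    proof (rule Inf_greatest)
      fix e assume "e \<in> {ereal (c0_dist (f x1) (f x2)) |x1 x2. x1 \<in> X \<and> x2 \<in> X \<and> t \<le> d x1 x2}"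
      then obtain x1 x2 where e: "e = ereal (c0_dist (f x1) (f x2))" "x1 \<in> X" "x2 \<in> X" "t \<le> d x1 x2" by blast
      have nn: "0 \<le> c0_dist (f x1) (f x2)" using c0_dist_nonneg fX e(2,3) by blast
      have dn: "0 \<le> d x1 x2" by simp
      have tA: "t / A \<le> d x1 x2 / A" using e(4) A1 by (simp add: divide_right_mono)
      show "ereal (t / A - 2*D) \<le> e"
      proof (cases "2*D \<le> d x1 x2")
        case True
        then have "\<beta> * d x1 x2 \<le> c0_dist (f x1) (f x2)" using lo e by blast
        then show ?thesis using Ab[OF dn] tA D e(1) by simp
      next
        case False
        have "d x1 x2 / A \<le> d x1 x2 / 1" using A1 dn by (intro divide_left_mono) auto
        then have "d x1 x2 / A \<le> d x1 x2" by simp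
        then show ?thesis using False tA nn e(1) by simp
      qed
    qed
  qed
qed



theorem corollary3p13:
  fixes X :: "'a set" and d :: "'a \<Rightarrow> 'a \<Rightarrow> real"
  assumes "Metric_space X d"
    and "\<exists>g :: nat \<times> 'a set \<Rightarrow> 'b. inj g"
  shows "((\<exists>I :: 'b set. \<exists>f. f ` X \<subseteq> c0 I \<and> coarse_lipschitz_embedding X d c0_dist f)
            \<longleftrightarrow> (\<exists>C\<ge>0. \<exists>D\<ge>0. \<forall>R\<ge>0. DeltaC X d R \<le> ereal (C * R + D)))
       \<and> ((\<exists>I :: 'b set. \<exists>f. f ` X \<subseteq> c0 I \<and> bilipschitz_embedding X d c0_dist f)
            \<longleftrightarrow> (\<exists>C\<ge>0. \<forall>R\<ge>0. DeltaC X d R \<le> ereal (C * R)))"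
proof -
  obtain g :: "nat \<times> 'a set \<Rightarrow> 'b" where g: "inj g" using assms(2) by blast
  note MS = assms(1)
  have P1: "(\<exists>I :: 'b set. \<exists>f. f ` X \<subseteq> c0 I \<and> coarse_lipschitz_embedding X d c0_dist f)
            \<longleftrightarrow> (\<exists>C\<ge>0. \<exists>D\<ge>0. \<forall>R\<ge>0. DeltaC X d R \<le> ereal (C * R + D))"
  proof
    assume "\<exists>I :: 'b set. \<exists>f. f ` X \<subseteq> c0 I \<and> coarse_lipschitz_embedding X d c0_dist f"
    then obtain I :: "'b set" and f where fX: "f ` X \<subseteq> c0 I" and ce: "coarse_lipschitz_embedding X d c0_dist f" by blast
    obtain A B where A: "A \<ge> 1" and B: "B \<ge> 0"
      and h: "\<forall>t. omega_mod X d c0_dist f t \<le> ereal (A * t + B) \<and> rho_mod X d c0_dist f t \<ge> ereal (t / A - B)"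
      using ce unfolding coarse_lipschitz_embedding_def by blast
    have "\<forall>R\<ge>0. DeltaC X d R \<le> ereal ((6*A*A) * R + A*(7*B+6))"
      by (rule fwd(1)[OF MS fX A B]) (use h in auto)
    moreover have "0 \<le> 6*A*A" "0 \<le> A*(7*B+6)" using A B by auto
    ultimately show "\<exists>C\<ge>0. \<exists>D\<ge>0. \<forall>R\<ge>0. DeltaC X d R \<le> ereal (C * R + D)" by blast
  next
    assume "\<exists>C\<ge>0. \<exists>D\<ge>0. \<forall>R\<ge>0. DeltaC X d R \<le> ereal (C * R + D)"
    then obtain C D where C: "C \<ge> 0" and D: "D \<ge> 0" and DC: "\<forall>R\<ge>0. DeltaC X d R \<le> ereal (C * R + D)" by blast
    obtain f :: "'a \<Rightarrow> 'b \<Rightarrow> real" and A where A: "A \<ge> 1" and fX: "f ` X \<subseteq> c0 UNIV"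
      and h: "\<forall>t. omega_mod X d c0_dist f t \<le> ereal (A * t + 2*D) \<and> ereal (t / A - 2*D) \<le> rho_mod X d c0_dist f t"
      using bwd[OF MS C D _ g] DC by blast
    have "coarse_lipschitz_embedding X d c0_dist f"
    proof -
      have "2*D \<ge> 0" using D by simp
      then show ?thesis unfolding coarse_lipschitz_embedding_def using A h by blast
    qed
    then show "\<exists>I :: 'b set. \<exists>f. f ` X \<subseteq> c0 I \<and> coarse_lipschitz_embedding X d c0_dist f" using fX by blast
  qed
  have P2: "(\<exists>I :: 'b set. \<exists>f. f ` X \<subseteq> c0 I \<and> bilipschitz_embedding X d c0_dist f)
            \<longleftrightarrow> (\<exists>C\<ge>0. \<forall>R\<ge>0. DeltaC X d R \<le> ereal (C * R))"
  proof
    assume "\<exists>I :: 'b set. \<exists>f. f ` X \<subseteq> c0 I \<and> bilipschitz_embedding X d c0_dist f"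
    then obtain I :: "'b set" and f where fX: "f ` X \<subseteq> c0 I" and ce: "bilipschitz_embedding X d c0_dist f" by blast
    obtain A where A: "A \<ge> 1"
      and h: "\<forall>t. omega_mod X d c0_dist f t \<le> ereal (A * t) \<and> rho_mod X d c0_dist f t \<ge> ereal (t / A)"
      using ce unfolding bilipschitz_embedding_def by blast
    have "\<forall>R\<ge>0. DeltaC X d R \<le> ereal ((6*A*A) * R)"
      by (rule fwd(2)[OF MS fX A order_refl]) (use h in auto)
    moreover have "0 \<le> 6*A*A" using A by auto
    ultimately show "\<exists>C\<ge>0. \<forall>R\<ge>0. DeltaC X d R \<le> ereal (C * R)" by blast
  next
    assume "\<exists>C\<ge>0. \<forall>R\<ge>0. DeltaC X d R \<le> ereal (C * R)"
    then obtain C where C: "C \<ge> 0" and DC: "\<forall>R\<ge>0. DeltaC X d R \<le> ereal (C * R)" by blast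
    obtain f :: "'a \<Rightarrow> 'b \<Rightarrow> real" and A where A: "A \<ge> 1" and fX: "f ` X \<subseteq> c0 UNIV"
      and h: "\<forall>t. omega_mod X d c0_dist f t \<le> ereal (A * t + 2*0) \<and> ereal (t / A - 2*0) \<le> rho_mod X d c0_dist f t"
      using bwd[OF MS C order_refl _ g] DC by fastforce
    have "bilipschitz_embedding X d c0_dist f"
      unfolding bilipschitz_embedding_def using A h by (intro exI[of _ A]) auto
    then show "\<exists>I :: 'b set. \<exists>f. f ` X \<subseteq> c0 I \<and> bilipschitz_embedding X d c0_dist f" using fX by blast
  qed
  show ?thesis using P1 P2 by blast
qed


end
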